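(* The kernel invariance algebra $\mathfrak g^\cap=\bigcap_V\mathfrak g_V$ of the class of equations $i\psi_t+\psi_{xx}+V(t,x)\psi=0$, the intersection running over all smooth complex-valued potentials $V$, is the two-dimensional algebra $\langle M,I\rangle$.
   Context: For a smooth complex-valued potential $V(t,x)$, $\mathfrak g_V$ is the maximal Lie invariance algebra of the linear Schrödinger equation $i\psi_t+\psi_{xx}+V(t,x)\psi=0$ ($\psi$ complex-valued, $t,x$ real), whose elements are vector fields on the space of $(t,x,\psi,\psi^* )$ with $\psi^*$ treated as an additional dependent variable. $M=i\psi\partial_\psi-i\psi^*\partial_{\psi^*}$, $I=\psi\partial_\psi+\psi^*\partial_{\psi^*}$. *)

theory Defs
  imports "HOL-Analysis.Analysis"
begin

fun dd :: "'a::real_normed_vector list \<Rightarrow> ('a \<Rightarrow> 'b::real_normed_vector) \<Rightarrow> 'a \<Rightarrow> 'b" where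
  "dd [] f = f"
| "dd (v # vs) f = (\<lambda>x. frechet_derivative (dd vs f) (at x) v)"

definition smooth :: "('a::real_normed_vector \<Rightarrow> 'b::real_normed_vector) \<Rightarrow> bool" where
  "smooth f \<longleftrightarrow> (\<forall>vs. continuous_on UNIV (dd vs f) \<and> (dd vs f) differentiable_on UNIV)"

definition pt :: "(real \<Rightarrow> real \<Rightarrow> 'b::real_normed_vector) \<Rightarrow> real \<Rightarrow> real \<Rightarrow> 'b" where
  "pt f t x = vector_derivative (\<lambda>s. f s x) (at t)"

definition px :: "(real \<Rightarrow> real \<Rightarrow> 'b::real_normed_vector) \<Rightarrow> real \<Rightarrow> real \<Rightarrow> 'b" where
  "px f t x = vector_derivative (\<lambda>y. f t y) (at x)"

text \<open>A (real) vector field  tau d_t + xi d_x + eta d_psi + eta* d_psi*  on the space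
  with coordinates (t,x,psi,psi*), psi complex and psi* its complex conjugate.
  The coefficients are functions of (t,x,psi); tau, xi are real-valued, and the
  coefficient of d_psi* is the complex conjugate of eta.\<close>
record vfield =
  tau :: "real \<Rightarrow> real \<Rightarrow> complex \<Rightarrow> real"
  xi  :: "real \<Rightarrow> real \<Rightarrow> complex \<Rightarrow> real"
  eta :: "real \<Rightarrow> real \<Rightarrow> complex \<Rightarrow> complex"

definition smooth_vf :: "vfield \<Rightarrow> bool" where
  "smooth_vf Q \<longleftrightarrow> smooth (\<lambda>(t,x,z). tau Q t x z) \<and> smooth (\<lambda>(t,x,z). xi Q t x z)
                   \<and> smooth (\<lambda>(t,x,z). eta Q t x z)"

definition vf_add :: "vfield \<Rightarrow> vfield \<Rightarrow> vfield" where
  "vf_add P Q = \<lparr>tau = (\<lambda>t x z. tau P t x z + tau Q t x z),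
                 xi = (\<lambda>t x z. xi P t x z + xi Q t x z),
                 eta = (\<lambda>t x z. eta P t x z + eta Q t x z)\<rparr>"

definition vf_scale :: "real \<Rightarrow> vfield \<Rightarrow> vfield" where
  "vf_scale c Q = \<lparr>tau = (\<lambda>t x z. c * tau Q t x z),
                   xi = (\<lambda>t x z. c * xi Q t x z),
                   eta = (\<lambda>t x z. of_real c * eta Q t x z)\<rparr>"

text \<open>M = i psi d_psi - i psi* d_psi*,  I = psi d_psi + psi* d_psi*.\<close>
definition vf_M :: vfield where
  "vf_M = \<lparr>tau = (\<lambda>t x z. 0), xi = (\<lambda>t x z. 0), eta = (\<lambda>t x z. \<i> * z)\<rparr>"

definition vf_I :: vfield where
  "vf_I = \<lparr>tau = (\<lambda>t x z. 0), xi = (\<lambda>t x z. 0), eta = (\<lambda>t x z. z)\<rparr>"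

definition schr :: "(real \<Rightarrow> real \<Rightarrow> complex) \<Rightarrow> (real \<Rightarrow> real \<Rightarrow> complex) \<Rightarrow> real \<Rightarrow> real \<Rightarrow> complex" where
  "schr V \<psi> t x = \<i> * pt \<psi> t x + px (px \<psi>) t x + V t x * \<psi> t x"

definition charac :: "vfield \<Rightarrow> (real \<Rightarrow> real \<Rightarrow> complex) \<Rightarrow> real \<Rightarrow> real \<Rightarrow> complex" where
  "charac Q \<psi> t x = eta Q t x (\<psi> t x) - of_real (tau Q t x (\<psi> t x)) * pt \<psi> t x
                     - of_real (xi Q t x (\<psi> t x)) * px \<psi> t x"

definition eta_t :: "vfield \<Rightarrow> (real \<Rightarrow> real \<Rightarrow> complex) \<Rightarrow> real \<Rightarrow> real \<Rightarrow> complex" where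
  "eta_t Q \<psi> t x = pt (charac Q \<psi>) t x + of_real (tau Q t x (\<psi> t x)) * pt (pt \<psi>) t x
                    + of_real (xi Q t x (\<psi> t x)) * pt (px \<psi>) t x"

definition eta_xx :: "vfield \<Rightarrow> (real \<Rightarrow> real \<Rightarrow> complex) \<Rightarrow> real \<Rightarrow> real \<Rightarrow> complex" where
  "eta_xx Q \<psi> t x = px (px (charac Q \<psi>)) t x + of_real (tau Q t x (\<psi> t x)) * pt (px (px \<psi>)) t x
                     + of_real (xi Q t x (\<psi> t x)) * px (px (px \<psi>)) t x"

definition pr_schr :: "(real \<Rightarrow> real \<Rightarrow> complex) \<Rightarrow> vfield \<Rightarrow> (real \<Rightarrow> real \<Rightarrow> complex) \<Rightarrow> real \<Rightarrow> real \<Rightarrow> complex" where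
  "pr_schr V Q \<psi> t x = \<i> * eta_t Q \<psi> t x + eta_xx Q \<psi> t x
      + (of_real (tau Q t x (\<psi> t x)) * pt V t x + of_real (xi Q t x (\<psi> t x)) * px V t x) * \<psi> t x
      + V t x * eta Q t x (\<psi> t x)"

text \<open>Q belongs to the maximal Lie invariance algebra g_V: Q is a smooth vector field and
  its second prolongation annihilates the equation on its solution manifold in the 2-jet
  space. Every 2-jet is realised by a smooth (polynomial) function psi at a point, so the
  solution manifold is parametrised by smooth psi and points (t,x) where the equation holds.\<close>
definition in_gV :: "(real \<Rightarrow> real \<Rightarrow> complex) \<Rightarrow> vfield \<Rightarrow> bool" where
  "in_gV V Q \<longleftrightarrow> smooth_vf Q \<and>
     (\<forall>\<psi>. smooth (\<lambda>(t,x). \<psi> t x) \<longrightarrow>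
        (\<forall>t x. schr V \<psi> t x = 0 \<longrightarrow> pr_schr V Q \<psi> t x = 0))"

definition kernel_alg :: "vfield set" where
  "kernel_alg = {Q. \<forall>V. smooth (\<lambda>(t,x). V t x) \<longrightarrow> in_gV V Q}"

end

theory Submission
  imports Defs
begin


lemma dd_append: "dd us (dd vs f) = dd (us @ vs) f"
  by (induction us) auto

lemma smooth_dd: "smooth f \<Longrightarrow> smooth (dd vs f)"
  unfolding smooth_def by (simp add: dd_append)

lemma smooth_diff_at: "smooth f \<Longrightarrow> f differentiable (at p)"
  unfolding smooth_def differentiable_on_def
  by (metis UNIV_I dd.simps(1))

lemma smooth_cont: "smooth f \<Longrightarrow> continuous_on UNIV f"
  unfolding smooth_def by (metis dd.simps(1))

lemma affine_hd:
  assumes "bounded_linear L"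
  shows "((\<lambda>x. k + L x) has_derivative L) F"
  using has_derivative_add[OF has_derivative_const bounded_linear.has_derivative[OF assms has_derivative_ident]]
  by simp

lemma dd_affine:
  assumes "bounded_linear L"
  shows "\<exists>k' L'. bounded_linear L' \<and> dd vs (\<lambda>x. k + L x) = (\<lambda>x. k' + L' x)"
proof (induction vs)
  case Nil then show ?case using assms by auto
next
  case (Cons v vs)
  then obtain k' L' where L': "bounded_linear L'" and e: "dd vs (\<lambda>x. k + L x) = (\<lambda>x. k' + L' x)" by blast
  have "\<And>x. frechet_derivative (\<lambda>x. k' + L' x) (at x) = L'"
  proof -
    fix x
    have "((\<lambda>x. k' + L' x) has_derivative L') (at x)"
      using L' by (rule affine_hd)
    then show "frechet_derivative (\<lambda>x. k' + L' x) (at x) = L'" using frechet_derivative_at by metis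
  qed
  then have "dd (v # vs) (\<lambda>x. k + L x) = (\<lambda>x. L' v + (\<lambda>_. 0) x)" by (simp add: e)
  then show ?case using bounded_linear_zero by blast
qed

lemma smooth_affine:
  assumes "bounded_linear L"
  shows "smooth (\<lambda>x. k + L x)"
  unfolding smooth_def
proof
  fix vs
  obtain k' L' where L': "bounded_linear L'" and e: "dd vs (\<lambda>x. k + L x) = (\<lambda>x. k' + L' x)"
    using dd_affine[OF assms] by blast
  have "((\<lambda>x. k' + L' x) has_derivative L') (at x)" for x
    using L' by (rule affine_hd)
  then have d: "(\<lambda>x. k' + L' x) differentiable_on UNIV"
    unfolding differentiable_on_def differentiable_def by auto
  have "continuous_on UNIV (\<lambda>x. k' + L' x)"
    using L' by (intro continuous_intros) (auto intro: linear_continuous_on)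
  then show "continuous_on UNIV (dd vs (\<lambda>x. k + L x)) \<and> dd vs (\<lambda>x. k + L x) differentiable_on UNIV"
    using d e by simp
qed

lemma smooth_const: "smooth (\<lambda>x. k)"
  using smooth_affine[OF bounded_linear_zero, of k] by simp

lemma smooth_linear: "bounded_linear L \<Longrightarrow> smooth L"
  using smooth_affine[of L 0] by simp

lemma vd_line:
  fixes f :: "'a::real_normed_vector \<Rightarrow> 'b::real_normed_vector"
  assumes "f differentiable (at (a + s *\<^sub>R d))"
  shows "((\<lambda>s. f (a + s *\<^sub>R d)) has_vector_derivative frechet_derivative f (at (a + s *\<^sub>R d)) d) (at s)"
proof -
  let ?D = "frechet_derivative f (at (a + s *\<^sub>R d))"
  have fD: "(f has_derivative ?D) (at (a + s *\<^sub>R d))" using assms frechet_derivative_works by blast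
  have lin: "linear ?D" using has_derivative_bounded_linear[OF fD] bounded_linear.linear by blast
  have line: "((\<lambda>s. a + s *\<^sub>R d) has_derivative (\<lambda>h. h *\<^sub>R d)) (at s)"
    by (auto intro!: derivative_eq_intros)
  have "((f \<circ> (\<lambda>s. a + s *\<^sub>R d)) has_derivative (?D \<circ> (\<lambda>h. h *\<^sub>R d))) (at s)"
    using diff_chain_at[OF line fD] .
  moreover have "(?D \<circ> (\<lambda>h. h *\<^sub>R d)) = (\<lambda>h. h *\<^sub>R ?D d)"
    using lin by (auto simp: linear_scale)
  ultimately show ?thesis unfolding has_vector_derivative_def by (simp add: o_def)
qed

lemma smooth_line:
  assumes "smooth f"
  shows "((\<lambda>s. f (a + s *\<^sub>R d)) has_vector_derivative dd [d] f (a + s *\<^sub>R d)) (at s)"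
  using vd_line[OF smooth_diff_at[OF assms]] by simp

lemma cont_zero_ext:
  fixes g :: "complex \<Rightarrow> 'b::real_normed_vector"
  assumes "continuous_on UNIV g" "\<And>z. z \<noteq> 0 \<Longrightarrow> g z = 0"
  shows "g 0 = 0"
proof -
  have "(g \<longlongrightarrow> g 0) (at 0)" using assms(1) by (simp add: continuous_on_def)
  moreover have "(g \<longlongrightarrow> 0) (at 0)"
    by (rule tendsto_eventually) (auto simp: eventually_at_filter assms(2))
  ultimately show ?thesis using tendsto_unique[OF at_neq_bot] by blast
qed




lemma pt_hvd:
  assumes "smooth (\<lambda>(t,x). \<psi> t x)"
  shows "((\<lambda>s. \<psi> s x) has_vector_derivative dd [(1,0)] (\<lambda>(t,x). \<psi> t x) (t,x)) (at t)"
  using smooth_line[OF assms, where a="(0,x)" and s=t and d="(1,0)"] by simp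

lemma px_hvd:
  assumes "smooth (\<lambda>(t,x). \<psi> t x)"
  shows "((\<lambda>y. \<psi> t y) has_vector_derivative dd [(0,1)] (\<lambda>(t,x). \<psi> t x) (t,x)) (at x)"
  using smooth_line[OF assms, where a="(t,0)" and s=x and d="(0,1)"] by simp

lemma pt_eq: "smooth (\<lambda>(t,x). \<psi> t x) \<Longrightarrow> pt \<psi> t x = dd [(1,0)] (\<lambda>(t,x). \<psi> t x) (t,x)"
  unfolding pt_def by (rule vector_derivative_at[OF pt_hvd])

lemma px_eq: "smooth (\<lambda>(t,x). \<psi> t x) \<Longrightarrow> px \<psi> t x = dd [(0,1)] (\<lambda>(t,x). \<psi> t x) (t,x)"
  unfolding px_def by (rule vector_derivative_at[OF px_hvd])

lemma smooth_px: "smooth (\<lambda>(t,x). \<psi> t x) \<Longrightarrow> smooth (\<lambda>(t,x). px \<psi> t x)"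
proof -
  assume a: "smooth (\<lambda>(t,x). \<psi> t x)"
  have "(\<lambda>(t,x). px \<psi> t x) = dd [(0,1)] (\<lambda>(t,x). \<psi> t x)"
    using px_eq[OF a] by (auto simp: fun_eq_iff)
  then show ?thesis using smooth_dd[OF a, of "[(0,1)]"] by metis
qed

lemma pt_cmul:
  fixes \<psi> :: "real \<Rightarrow> real \<Rightarrow> 'a::real_normed_algebra"
  shows "smooth (\<lambda>(t,x). \<psi> t x) \<Longrightarrow> pt (\<lambda>t x. c * \<psi> t x) t x = c * pt \<psi> t x"
  unfolding pt_def
  by (metis pt_def pt_eq vector_derivative_at has_vector_derivative_mult_right pt_hvd)

lemma px_cmul:
  fixes \<psi> :: "real \<Rightarrow> real \<Rightarrow> 'a::real_normed_algebra"
  shows "smooth (\<lambda>(t,x). \<psi> t x) \<Longrightarrow> px (\<lambda>t x. c * \<psi> t x) t x = c * px \<psi> t x"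
  unfolding px_def
  by (metis px_def px_eq vector_derivative_at has_vector_derivative_mult_right px_hvd)

lemma smooth_case0: "smooth (\<lambda>(t::real,x::real,z::complex). (0::real))"
proof -
  have "(\<lambda>(t::real,x::real,z::complex). (0::real)) = (\<lambda>_. 0)" by auto
  then show ?thesis using smooth_const by metis
qed

lemma smooth_cz: "smooth (\<lambda>(t::real,x::real,z::complex). c * z)"
proof -
  have "(\<lambda>(t::real,x::real,z::complex). c * z) = (\<lambda>p. c * snd (snd p))" by auto
  moreover have "bounded_linear (\<lambda>p::real\<times>real\<times>complex. c * snd (snd p))"
    by (intro bounded_linear_compose[OF bounded_linear_mult_right]
        bounded_linear_compose[OF bounded_linear_snd bounded_linear_snd])
  ultimately show ?thesis using smooth_linear by metis
qed

lemma in_gV_cz: "in_gV V \<lparr>tau = (\<lambda>t x z. 0), xi = (\<lambda>t x z. 0), eta = (\<lambda>t x z. c * z)\<rparr>"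
  (is "in_gV V ?Q")
  unfolding in_gV_def
proof (intro conjI allI impI)
  show "smooth_vf ?Q" unfolding smooth_vf_def using smooth_case0 smooth_cz by simp
  fix \<psi> :: "real \<Rightarrow> real \<Rightarrow> complex" and t x
  assume s: "smooth (\<lambda>(t,x). \<psi> t x)" and e: "schr V \<psi> t x = 0"
  have ch: "charac ?Q \<psi> = (\<lambda>t x. c * \<psi> t x)" by (simp add: charac_def fun_eq_iff)
  have "px (\<lambda>t x. c * \<psi> t x) = (\<lambda>t x. c * px \<psi> t x)"
    using px_cmul[OF s] by (simp add: fun_eq_iff)
  then have xx: "px (px (\<lambda>t x. c * \<psi> t x)) t x = c * px (px \<psi>) t x"
    using px_cmul[OF smooth_px[OF s]] by simp
  have et: "eta_t ?Q \<psi> t x = c * pt \<psi> t x"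
    by (simp only: eta_t_def ch pt_cmul[OF s]) simp
  have exx: "eta_xx ?Q \<psi> t x = c * px (px \<psi>) t x"
    by (simp only: eta_xx_def ch xx) simp
  have "pr_schr V ?Q \<psi> t x = c * schr V \<psi> t x"
    unfolding pr_schr_def et exx schr_def by (simp add: algebra_simps)
  then show "pr_schr V ?Q \<psi> t x = 0" using e by simp
qed




lemma pt_const [simp]: "pt (\<lambda>t x. k) t x = 0" by (simp add: pt_def)
lemma px_const_fun [simp]: "px (\<lambda>t x. k) = (\<lambda>t x. 0)" by (simp add: px_def fun_eq_iff)
lemma px_const [simp]: "px (\<lambda>t x. k) t x = 0" by simp

lemma smooth_const2: "smooth (\<lambda>(t::real,x::real). k)"
proof -
  have "(\<lambda>(t::real,x::real). k) = (\<lambda>_. k)" by auto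
  then show ?thesis using smooth_const by metis
qed

lemma smooth_t: "smooth (\<lambda>(s::real,y::real). k + w * complex_of_real (s - t0))"
proof -
  have "(\<lambda>(s::real,y::real). k + w * complex_of_real (s - t0)) = (\<lambda>p. (k - w * of_real t0) + w * of_real (fst p))"
    by (auto simp: fun_eq_iff algebra_simps)
  moreover have "bounded_linear (\<lambda>p::real\<times>real. w * complex_of_real (fst p))"
    by (intro bounded_linear_compose[OF bounded_linear_mult_right]
        bounded_linear_compose[OF bounded_linear_of_real bounded_linear_fst])
  ultimately show ?thesis using smooth_affine by metis
qed

lemma smooth_x: "smooth (\<lambda>(s::real,y::real). k + w * complex_of_real (y - t0))"
proof -
  have "(\<lambda>(s::real,y::real). k + w * complex_of_real (y - t0)) = (\<lambda>p. (k - w * of_real t0) + w * of_real (snd p))"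
    by (auto simp: fun_eq_iff algebra_simps)
  moreover have "bounded_linear (\<lambda>p::real\<times>real. w * complex_of_real (snd p))"
    by (intro bounded_linear_compose[OF bounded_linear_mult_right]
        bounded_linear_compose[OF bounded_linear_of_real bounded_linear_snd])
  ultimately show ?thesis using smooth_affine by metis
qed

lemma pt_lin: "pt (\<lambda>s y. k + w * complex_of_real (s - t0)) t x = w"
proof -
  have "((\<lambda>s. k + w * complex_of_real (s - t0)) has_vector_derivative w) (at t)"
    by (auto intro!: derivative_eq_intros)
  then show ?thesis unfolding pt_def by (rule vector_derivative_at)
qed

lemma px_lin: "px (\<lambda>s y. k + w * complex_of_real (y - t0)) t x = w"
proof -
  have "((\<lambda>y. k + w * complex_of_real (y - t0)) has_vector_derivative w) (at x)"
    by (auto intro!: derivative_eq_intros)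
  then show ?thesis unfolding px_def by (rule vector_derivative_at)
qed

lemma cont_slice:
  fixes F :: "real \<Rightarrow> real \<Rightarrow> complex \<Rightarrow> 'b::real_normed_vector"
  assumes "smooth (\<lambda>(t,x,z). F t x z)"
  shows "continuous_on UNIV (\<lambda>z::complex. F t0 x0 z)"
proof -
  have c: "continuous_on UNIV (\<lambda>(t::real,x::real,z::complex). F t x z)" by (rule smooth_cont[OF assms])
  have "continuous_on UNIV (\<lambda>z::complex. (t0,x0,z))" by (intro continuous_intros)
  from continuous_on_compose2[OF c this] show ?thesis by simp
qed

lemma kernel_tau_xi:
  assumes hQ: "\<forall>V. smooth (\<lambda>(t,x). V t x) \<longrightarrow> in_gV V Q"
  shows "tau Q t0 x0 z = 0 \<and> xi Q t0 x0 z = 0"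
proof -
  have sQ: "smooth_vf Q" using hQ smooth_const2 unfolding in_gV_def by blast
  have nz: "tau Q t0 x0 z = 0 \<and> xi Q t0 x0 z = 0" if z0: "z \<noteq> 0" for t0 x0 z
  proof -
    let ?\<psi> = "\<lambda>(s::real) (y::real). z"
    have s\<psi>: "smooth (\<lambda>(s::real,y::real). z)" by (rule smooth_const2)
    have gen: "pr_schr V Q ?\<psi> t0 x0 = 0" if "smooth (\<lambda>(t,x). V t x)" "V t0 x0 = 0" for V
    proof -
      have "in_gV V Q" using hQ that(1) by blast
      moreover have "schr V ?\<psi> t0 x0 = 0" by (simp add: schr_def that(2))
      ultimately show ?thesis using s\<psi> unfolding in_gV_def by blast
    qed
    have sV2: "smooth (\<lambda>(s::real,y::real). 0 + 1 * complex_of_real (s - t0))" by (rule smooth_t)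
    have sV3: "smooth (\<lambda>(s::real,y::real). 0 + 1 * complex_of_real (y - x0))" by (rule smooth_x)
    have P1: "pr_schr (\<lambda>s y. 0) Q ?\<psi> t0 x0 = 0" by (rule gen) (rule smooth_const2, simp)
    have P2: "pr_schr (\<lambda>s y. 0 + 1 * complex_of_real (s - t0)) Q ?\<psi> t0 x0 = 0"
      using gen[OF sV2] by simp
    have P3: "pr_schr (\<lambda>s y. 0 + 1 * complex_of_real (y - x0)) Q ?\<psi> t0 x0 = 0"
      using gen[OF sV3] by simp
    have A: "\<i> * eta_t Q ?\<psi> t0 x0 + eta_xx Q ?\<psi> t0 x0 = 0"
      using P1 by (simp add: pr_schr_def)
    have "pt (\<lambda>s y. 0 + 1 * complex_of_real (s - t0)) t0 x0 = 1" by (rule pt_lin)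
    moreover have "px (\<lambda>s y. 0 + 1 * complex_of_real (s - t0)) t0 x0 = 0" by (simp add: px_def)
    ultimately have "complex_of_real (tau Q t0 x0 z) * z = 0"
      using P2 A unfolding pr_schr_def by simp
    then have t: "tau Q t0 x0 z = 0" using z0 by simp
    have "px (\<lambda>s y. 0 + 1 * complex_of_real (y - x0)) t0 x0 = 1" by (rule px_lin)
    moreover have "pt (\<lambda>s y. 0 + 1 * complex_of_real (y - x0)) t0 x0 = 0" by (simp add: pt_def)
    ultimately have "complex_of_real (xi Q t0 x0 z) * z = 0"
      using P3 A unfolding pr_schr_def by simp
    then have "xi Q t0 x0 z = 0" using z0 by simp
    with t show ?thesis by simp
  qed
  show ?thesis
  proof (cases "z = 0")
    case False then show ?thesis using nz by blast
  next
    case True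
    have st: "smooth (\<lambda>(t,x,z). tau Q t x z)" and sx: "smooth (\<lambda>(t,x,z). xi Q t x z)"
      using sQ unfolding smooth_vf_def by auto
    have "tau Q t0 x0 0 = 0"
      using cont_zero_ext[OF cont_slice[OF st]] nz by blast
    moreover have "xi Q t0 x0 0 = 0"
      using cont_zero_ext[OF cont_slice[OF sx]] nz by blast
    ultimately show ?thesis using True by simp
  qed
qed




lemma alg:
  fixes d1 d0 dz p w z0 e :: complex
  assumes a: "d1 = d0 + dz" and k1: "\<i>*d1 + p + (-\<i>*w/z0)*e = 0" and k0: "\<i>*d0 + p = 0"
  shows "dz = w*(e/z0)"
proof -
  have "\<i>*dz = (\<i>*d1 + p + (-\<i>*w/z0)*e) - (\<i>*d0 + p) + \<i>*(w*(e/z0))"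
    using a by (simp add: algebra_simps)
  then have "\<i>*dz = \<i>*(w*(e/z0))" using k1 k0 by simp
  then show ?thesis using mult_left_cancel[of "\<i>" dz "w*(e/z0)"] by (simp only:) simp
qed

lemma pr_simp:
  assumes "tau Q = (\<lambda>t x z. 0)" "xi Q = (\<lambda>t x z. 0)"
  shows "pr_schr V Q \<psi> t x = \<i> * pt (\<lambda>t x. eta Q t x (\<psi> t x)) t x
            + px (px (\<lambda>t x. eta Q t x (\<psi> t x))) t x + V t x * eta Q t x (\<psi> t x)"
proof -
  have "charac Q \<psi> = (\<lambda>t x. eta Q t x (\<psi> t x))" by (simp add: charac_def fun_eq_iff assms)
  then show ?thesis by (simp add: pr_schr_def eta_t_def eta_xx_def assms)
qed

lemma eta_lin:
  assumes hQ: "\<forall>V. smooth (\<lambda>(t,x). V t x) \<longrightarrow> in_gV V Q"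
    and tz: "tau Q = (\<lambda>t x z. 0)" and xz: "xi Q = (\<lambda>t x z. 0)"
    and z: "z \<noteq> 0"
  shows "eta Q t0 x0 z = z * eta Q t0 x0 1"
proof -
  have sQ: "smooth_vf Q" using hQ smooth_const2 unfolding in_gV_def by blast
  define E where "E = (\<lambda>(t::real,x::real,z::complex). eta Q t x z)"
  have sE: "smooth E" using sQ unfolding smooth_vf_def E_def by auto
  define P where "P = (\<lambda>z0. vector_derivative (\<lambda>y. vector_derivative (\<lambda>y'. eta Q t0 y' z0) (at y)) (at x0))"
  have deriv: "((\<lambda>z. eta Q t0 x0 z) has_field_derivative (eta Q t0 x0 z0 / z0)) (at z0)"
    if z0: "z0 \<noteq> 0" for z0
  proof -
    define D where "D = frechet_derivative E (at (t0,x0,z0))"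
    have key: "\<i> * D (1,0,w) + P z0 + (-\<i> * w / z0) * eta Q t0 x0 z0 = 0" for w
    proof -
      let ?\<psi> = "\<lambda>(s::real) (y::real). z0 + w * complex_of_real (s - t0)"
      let ?V = "\<lambda>(s::real) (y::real). -\<i> * w / z0"
      have s\<psi>: "smooth (\<lambda>(s::real,y::real). z0 + w * complex_of_real (s - t0))" by (rule smooth_t)
      have sV: "smooth (\<lambda>(s::real,y::real). -\<i> * w / z0)" by (rule smooth_const2)
      have g: "in_gV ?V Q" using hQ sV by blast
      have pxz: "px ?\<psi> = (\<lambda>s y. 0)" by (simp add: px_def fun_eq_iff)
      have ptl: "pt ?\<psi> t0 x0 = w" by (rule pt_lin)
      have "schr ?V ?\<psi> t0 x0 = \<i> * w + (-\<i> * w / z0) * z0"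
        unfolding schr_def ptl pxz by simp
      also have "\<dots> = 0" using z0 by simp
      finally have sch: "schr ?V ?\<psi> t0 x0 = 0" .
      have pr: "pr_schr ?V Q ?\<psi> t0 x0 = 0" using g s\<psi> sch unfolding in_gV_def by blast
      have fe: "(\<lambda>s. E ((0,x0,z0 - w * of_real t0) + s *\<^sub>R (1,0,w))) = (\<lambda>s. eta Q s x0 (z0 + w * complex_of_real (s - t0)))"
        by (auto simp: fun_eq_iff scaleR_conv_of_real algebra_simps E_def)
      have pe: "(0,x0,z0 - w * of_real t0) + t0 *\<^sub>R (1,0,w) = (t0,x0,z0)"
        by (simp add: scaleR_conv_of_real algebra_simps)
      have "((\<lambda>s. eta Q s x0 (z0 + w * complex_of_real (s - t0))) has_vector_derivative D (1,0,w)) (at t0)"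
        using smooth_line[OF sE, where a="(0,x0,z0 - w * of_real t0)" and s=t0 and d="(1,0,w)"]
        unfolding fe pe D_def by simp
      then have ptv: "pt (\<lambda>t x. eta Q t x (?\<psi> t x)) t0 x0 = D (1,0,w)"
        unfolding pt_def by (rule vector_derivative_at)
      have pxv: "px (px (\<lambda>t x. eta Q t x (?\<psi> t x))) t0 x0 = P z0"
        by (simp add: px_def P_def)
      show ?thesis using pr unfolding pr_simp[OF tz xz] ptv pxv by simp
    qed
    have hE: "(E has_derivative D) (at (t0,x0,z0))"
      unfolding D_def using smooth_diff_at[OF sE] frechet_derivative_works by blast
    have lin: "linear D" using has_derivative_bounded_linear[OF hE] bounded_linear.linear by blast
    have Dz: "D (0,0,w) = w * (eta Q t0 x0 z0 / z0)" for w
    proof -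
      have "D (1,0,w) = D ((1,0,0) + (0,0,w))" by simp
      also have "\<dots> = D (1,0,0) + D (0,0,w)" using lin by (simp only: linear_add)
      finally have a: "D (1,0,w) = D (1,0,0) + D (0,0,w)" .
      have k1: "\<i> * D (1,0,w) + P z0 + (-\<i> * w / z0) * eta Q t0 x0 z0 = 0" by (rule key)
      have k0: "\<i> * D (1,0,0) + P z0 = 0" using key[of 0] by simp
      show ?thesis by (rule alg[OF a k1 k0])
    qed
    have hl: "((\<lambda>z. (t0,x0,z)) has_derivative (\<lambda>h. (0,0,h))) (at z0)"
      by (auto intro!: derivative_eq_intros)
    have "((E \<circ> (\<lambda>z. (t0,x0,z))) has_derivative (D \<circ> (\<lambda>h. (0,0,h)))) (at z0)"
      using diff_chain_at[OF hl, of E D] hE by simp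
    moreover have "E \<circ> (\<lambda>z. (t0,x0,z)) = (\<lambda>z. eta Q t0 x0 z)" by (simp add: E_def fun_eq_iff)
    moreover have "D \<circ> (\<lambda>h. (0,0,h)) = (*) (eta Q t0 x0 z0 / z0)" by (simp add: fun_eq_iff Dz)
    ultimately show ?thesis unfolding has_field_derivative_def by simp
  qed
  let ?h = "\<lambda>z. eta Q t0 x0 z / z"
  have hd: "(?h has_derivative (\<lambda>x. 0)) (at z1)" if "z1 \<in> -{0}" for z1
  proof -
    have nz: "z1 \<noteq> 0" using that by simp
    have "(?h has_field_derivative ((eta Q t0 x0 z1 / z1) * z1 - eta Q t0 x0 z1 * 1) / (z1 * z1)) (at z1)"
      by (rule DERIV_divide[OF deriv[OF nz] DERIV_ident nz])
    moreover have "((eta Q t0 x0 z1 / z1) * z1 - eta Q t0 x0 z1 * 1) / (z1 * z1) = 0" using nz by simp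
    ultimately have "(?h has_field_derivative 0) (at z1)" by metis
    then have "(?h has_derivative (*) 0) (at z1)" unfolding has_field_derivative_def .
    moreover have e: "(*) (0::complex) = (\<lambda>x. 0)" by (simp add: fun_eq_iff)
    ultimately show ?thesis by (simp only: e)
  qed
  have op: "open (-{0::complex})" by (simp add: open_Compl)
  have co: "connected (-{0::complex})" by (rule connected_punctured_universe) simp
  have "?h z = ?h 1" by (rule has_derivative_zero_unique_connected[OF op co hd]) (use z in auto)
  then show ?thesis using z by (simp add: field_simps)
qed




lemma eta_form:
  assumes hQ: "\<forall>V. smooth (\<lambda>(t,x). V t x) \<longrightarrow> in_gV V Q"
    and tz: "tau Q = (\<lambda>t x z. 0)" and xz: "xi Q = (\<lambda>t x z. 0)"
  shows "eta Q t x z = z * eta Q t x 1"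
proof (cases "z = 0")
  case False then show ?thesis using eta_lin[OF hQ tz xz] by blast
next
  case True
  have sQ: "smooth_vf Q" using hQ smooth_const2 unfolding in_gV_def by blast
  have se: "smooth (\<lambda>(t,x,z). eta Q t x z)" using sQ unfolding smooth_vf_def by auto
  have "continuous_on UNIV (\<lambda>z. eta Q t x z - z * eta Q t x 1)"
    by (intro continuous_intros cont_slice[OF se])
  moreover have "eta Q t x z' - z' * eta Q t x 1 = 0" if "z' \<noteq> 0" for z'
  proof -
    have e: "eta Q t x z' = z' * eta Q t x 1" by (rule eta_lin[OF hQ tz xz that])
    show ?thesis unfolding e by simp
  qed
  ultimately have "eta Q t x 0 - 0 * eta Q t x 1 = 0" by (rule cont_zero_ext)
  then show ?thesis using True by simp
qed

lemma vd_zero_const: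
  fixes f :: "real \<Rightarrow> 'b::real_normed_vector"
  assumes "\<And>s. (f has_vector_derivative 0) (at s)"
  shows "f a = f b"
proof -
  have d: "(f has_derivative (\<lambda>x. 0)) (at s)" for s using assms[of s] unfolding has_vector_derivative_def by simp
  show ?thesis by (rule has_derivative_zero_unique_connected[of UNIV]) (auto intro: d)
qed

lemma c_const:
  assumes hQ: "\<forall>V. smooth (\<lambda>(t,x). V t x) \<longrightarrow> in_gV V Q"
    and tz: "tau Q = (\<lambda>t x z. 0)" and xz: "xi Q = (\<lambda>t x z. 0)"
  shows "eta Q t x 1 = eta Q 0 0 1"
proof -
  have sQ: "smooth_vf Q" using hQ smooth_const2 unfolding in_gV_def by blast
  define E where "E = (\<lambda>(t::real,x::real,z::complex). eta Q t x z)"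
  have sE: "smooth E" using sQ unfolding smooth_vf_def E_def by auto
  define c where "c = (\<lambda>t x. eta Q t x (1::complex))"
  have ct: "((\<lambda>s. c s x) has_vector_derivative dd [(1,0,0)] E (t,x,1)) (at t)" for t x
    using smooth_line[OF sE, where a="(0,x,1)" and s=t and d="(1,0,0)"] by (simp add: E_def c_def)
  have cx: "((\<lambda>y. c t y) has_vector_derivative dd [(0,1,0)] E (t,y,1)) (at y)" for t y
    using smooth_line[OF sE, where a="(t,0,1)" and s=y and d="(0,1,0)"] by (simp add: E_def c_def)
  have ptc: "pt c t x = dd [(1,0,0)] E (t,x,1)" for t x
    unfolding pt_def by (rule vector_derivative_at[OF ct])
  have pxc: "px c t y = dd [(0,1,0)] E (t,y,1)" for t y
    unfolding px_def by (rule vector_derivative_at[OF cx])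
  have cxx: "((\<lambda>y. px c t y) has_vector_derivative dd [(0,1,0)] (dd [(0,1,0)] E) (t,y,1)) (at y)" for t y
  proof -
    have l: "((\<lambda>y. dd [(0,1,0)] E ((t,0,1) + y *\<^sub>R (0,1,0))) has_vector_derivative
               dd [(0,1,0)] (dd [(0,1,0)] E) ((t,0,1) + y *\<^sub>R (0,1,0))) (at y)"
      by (rule smooth_line[OF smooth_dd[OF sE, of "[(0,1,0)]"]])
    have pe: "\<And>y. (t,0,1) + y *\<^sub>R (0,1,0) = (t,y,(1::complex))" by simp
    from l have l2: "((\<lambda>y. dd [(0,1,0)] E (t,y,1)) has_vector_derivative dd [(0,1,0)] (dd [(0,1,0)] E) (t,y,1)) (at y)"
      by (simp only: pe)
    have "(\<lambda>y. px c t y) = (\<lambda>y. dd [(0,1,0)] E (t,y,1))" by (simp only: pxc)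
    with l2 show ?thesis by (simp only:)
  qed
  have pxxc: "px (px c) t x = dd [(0,1,0)] (dd [(0,1,0)] E) (t,x,1)" for t x
    unfolding px_def[of "px c"] by (rule vector_derivative_at[OF cxx])
  have eq1: "\<i> * pt c t x + px (px c) t x = 0" for t x
  proof -
    have g: "in_gV (\<lambda>s y. 0) Q" using hQ smooth_const2 by blast
    have s1: "smooth (\<lambda>(s::real,y::real). (1::complex))" by (rule smooth_const2)
    have "schr (\<lambda>s y. 0) (\<lambda>s y. 1) t x = 0" by (simp add: schr_def)
    then have "pr_schr (\<lambda>s y. 0) Q (\<lambda>s y. 1) t x = 0" using g s1 unfolding in_gV_def by blast
    then show ?thesis unfolding pr_simp[OF tz xz] c_def by simp
  qed
  have eq2: "\<i> * (of_real x * pt c t x) + (of_real x * px (px c) t x + 2 * px c t x) = 0" for t x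
  proof -
    have g: "in_gV (\<lambda>s y. 0) Q" using hQ smooth_const2 by blast
    have s2: "smooth (\<lambda>(s::real,y::real). complex_of_real y)" using smooth_x[of 0 1 0] by simp
    have dy: "((\<lambda>y. complex_of_real y) has_vector_derivative 1) (at y)" for y
      using has_vector_derivative_of_real[OF DERIV_ident] by simp
    have "px (\<lambda>s y. complex_of_real y) = (\<lambda>s y. 1)"
      unfolding px_def by (simp add: fun_eq_iff vector_derivative_at[OF dy])
    then have "schr (\<lambda>s y. 0) (\<lambda>s y. complex_of_real y) t x = 0" by (simp add: schr_def pt_def)
    then have pr: "pr_schr (\<lambda>s y. 0) Q (\<lambda>s y. complex_of_real y) t x = 0" using g s2 unfolding in_gV_def by blast
    have fe: "(\<lambda>t x. eta Q t x (complex_of_real x)) = (\<lambda>t x. of_real x * c t x)"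
      by (rule ext)+ (subst eta_form[OF hQ tz xz], simp add: c_def)
    have p1: "pt (\<lambda>t x. of_real x * c t x) t x = of_real x * pt c t x"
      unfolding pt_def[of "\<lambda>t x. of_real x * c t x"]
      by (rule vector_derivative_at) (unfold ptc, rule has_vector_derivative_mult_right[OF ct])
    have p2: "px (\<lambda>t x. of_real x * c t x) = (\<lambda>t y. of_real y * px c t y + c t y)"
    proof (intro ext)
      fix t y
      have "((\<lambda>y. of_real y * c t y) has_vector_derivative (of_real y * px c t y + 1 * c t y)) (at y)"
        using has_vector_derivative_mult[OF dy[of y] cx[of t y]] by (simp add: pxc)
      then show "px (\<lambda>t x. of_real x * c t x) t y = of_real y * px c t y + c t y"
        unfolding px_def by (simp add: vector_derivative_at)
    qed
    have "((\<lambda>y. of_real y * px c t y + c t y) has_vector_derivative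
            ((of_real x * px (px c) t x + 1 * px c t x) + px c t x)) (at x)"
      using has_vector_derivative_add[OF has_vector_derivative_mult[OF dy[of x] cxx[of t x]] cx[of t x]]
      by (simp add: pxc pxxc)
    then have p3: "px (px (\<lambda>t x. of_real x * c t x)) t x = of_real x * px (px c) t x + 2 * px c t x"
      unfolding p2 px_def[of "\<lambda>t y. of_real y * px c t y + c t y"]
      by (simp add: vector_derivative_at)
    show ?thesis using pr unfolding pr_simp[OF tz xz] fe p1 p3 by simp
  qed
  have cx0: "px c t x = 0" for t x
  proof -
    have "2 * px c t x = \<i> * (of_real x * pt c t x) + (of_real x * px (px c) t x + 2 * px c t x)
           - of_real x * (\<i> * pt c t x + px (px c) t x)" by (simp add: algebra_simps)
    then show ?thesis using eq1[of t x] eq2[of x t] by simp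
  qed
  have "px c = (\<lambda>t x. 0)" using cx0 by (simp add: fun_eq_iff)
  then have "px (px c) t x = 0" for t x by simp
  then have ct0: "pt c t x = 0" for t x using eq1[of t x] by simp
  have "c t x = c 0 x"
  proof (rule vd_zero_const)
    fix s
    have "((\<lambda>s. c s x) has_vector_derivative pt c s x) (at s)"
      unfolding ptc by (rule ct)
    then show "((\<lambda>s. c s x) has_vector_derivative 0) (at s)" by (simp only: ct0)
  qed
  also have "\<dots> = c 0 0"
  proof (rule vd_zero_const[where f="\<lambda>y. c 0 y"])
    fix s
    have "((\<lambda>y. c 0 y) has_vector_derivative px c 0 s) (at s)"
      unfolding pxc by (rule cx)
    then show "((\<lambda>y. c 0 y) has_vector_derivative 0) (at s)" by (simp only: cx0)
  qed
  finally show ?thesis by (simp add: c_def)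
qed

lemma kernel_sub:
  assumes "Q \<in> kernel_alg"
  shows "\<exists>a b. Q = vf_add (vf_scale a vf_M) (vf_scale b vf_I)"
proof -
  have hQ: "\<forall>V. smooth (\<lambda>(t,x). V t x) \<longrightarrow> in_gV V Q" using assms unfolding kernel_alg_def by blast
  have tz: "tau Q = (\<lambda>t x z. 0)" and xz: "xi Q = (\<lambda>t x z. 0)"
    using kernel_tau_xi[OF hQ] by (auto simp: fun_eq_iff)
  define C where "C = eta Q 0 0 1"
  have ez1: "eta Q t x z = z * C" for t x z
  proof -
    have "eta Q t x z = z * eta Q t x 1" by (rule eta_form[OF hQ tz xz])
    also have "\<dots> = z * C" unfolding C_def by (subst c_const[OF hQ tz xz]) (rule refl)
    finally show ?thesis .
  qed
  have ez: "eta Q = (\<lambda>t x z. z * C)" by (intro ext) (rule ez1)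
  have "Q = vf_add (vf_scale (Im C) vf_M) (vf_scale (Re C) vf_I)"
  proof (rule vfield.equality)
    show "tau Q = tau (vf_add (vf_scale (Im C) vf_M) (vf_scale (Re C) vf_I))"
      by (simp add: tz vf_add_def vf_scale_def vf_M_def vf_I_def)
    show "xi Q = xi (vf_add (vf_scale (Im C) vf_M) (vf_scale (Re C) vf_I))"
      by (simp add: xz vf_add_def vf_scale_def vf_M_def vf_I_def)
    show "eta Q = eta (vf_add (vf_scale (Im C) vf_M) (vf_scale (Re C) vf_I))"
      by (simp add: ez vf_add_def vf_scale_def vf_M_def vf_I_def fun_eq_iff complex_eq_iff)
    show "more Q = more (vf_add (vf_scale (Im C) vf_M) (vf_scale (Re C) vf_I))"
      by (metis (full_types) old.unit.exhaust)
  qed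
  then show ?thesis by blast
qed

lemma combo_eq: "vf_add (vf_scale a vf_M) (vf_scale b vf_I)
   = \<lparr>tau = (\<lambda>t x z. 0), xi = (\<lambda>t x z. 0), eta = (\<lambda>t x z. (of_real b + \<i> * of_real a) * z)\<rparr>"
  by (simp add: vf_add_def vf_scale_def vf_M_def vf_I_def fun_eq_iff algebra_simps)

theorem proposition1:
  shows "kernel_alg = {vf_add (vf_scale a vf_M) (vf_scale b vf_I) | a b. True}
         \<and> (\<forall>a b. vf_add (vf_scale a vf_M) (vf_scale b vf_I) = vf_add (vf_scale 0 vf_M) (vf_scale 0 vf_I)
                  \<longrightarrow> a = 0 \<and> b = 0)"
proof -
  have s1: "kernel_alg \<subseteq> {vf_add (vf_scale a vf_M) (vf_scale b vf_I) | a b. True}"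
    using kernel_sub by blast
  have s2: "{vf_add (vf_scale a vf_M) (vf_scale b vf_I) | a b. True} \<subseteq> kernel_alg"
  proof
    fix Q assume "Q \<in> {vf_add (vf_scale a vf_M) (vf_scale b vf_I) | a b. True}"
    then obtain a b where "Q = vf_add (vf_scale a vf_M) (vf_scale b vf_I)" by blast
    then show "Q \<in> kernel_alg" unfolding kernel_alg_def by (simp add: combo_eq in_gV_cz)
  qed
  have s3: "a = 0 \<and> b = 0"
    if h: "vf_add (vf_scale a vf_M) (vf_scale b vf_I) = vf_add (vf_scale 0 vf_M) (vf_scale 0 vf_I)" for a b :: real
  proof -
    have "eta (vf_add (vf_scale a vf_M) (vf_scale b vf_I)) 0 0 1 = eta (vf_add (vf_scale 0 vf_M) (vf_scale 0 vf_I)) 0 0 1"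
      using h by simp
    then have "complex_of_real b + \<i> * complex_of_real a = 0" by (simp add: combo_eq)
    then show "a = 0 \<and> b = 0" by (simp add: complex_eq_iff)
  qed
  show ?thesis using s1 s2 s3 by blast
qed


end
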